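(* Let $n\ge 5$ and $M\ge1$ be integers, $U=\{0,1,\ldots,M-1\}$, and let $\phi:\binom{U}{2}\to\{\text{red},\text{blue}\}$ be a $2$-coloring such that every $n$-element subset of $U$ contains three elements $x<y<z$ with $\phi(x,y)=\phi(y,z)\ne\phi(x,z)$. Let $H=H_\phi$ be the $4$-uniform hypergraph on $V=\{0,\ldots,2^M-1\}$ defined below, and let $Q=(v_1<v_2<\cdots<v_m)$ be an independent set of $H$, with $\delta_i=\delta(v_i,v_{i+1})$ for $1\le i\le m-1$. Then there do not exist indices $i_1<i_2<\cdots<i_n$ in $\{1,\ldots,m-1\}$ such that $\delta_{i_1},\ldots,\delta_{i_n}$ is strictly increasing or strictly decreasing and such that for all $1\le a<b<c\le n$ there exist $u_1<u_2<u_3<u_4$ in $Q$ with $(\delta(u_1,u_2),\delta(u_2,u_3),\delta(u_3,u_4))=(\delta_{i_a},\delta_{i_b},\delta_{i_c})$.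
   Context: Every $a\in V=\{0,\ldots,2^M-1\}$ is written in binary as $a=\sum_{i=0}^{M-1}a(i)2^i$ with $a(i)\in\{0,1\}$. For $a\ne b$ in $V$, $\delta(a,b)$ denotes the largest index $i$ with $a(i)\ne b(i)$; thus $\delta(a,b)\in U$. For a pair $\{x,y\}$ of distinct elements of $U$ we write $\phi(x,y)=\phi(y,x)$ for its color. For a $4$-tuple $v_1<v_2<v_3<v_4$ of $V$, set $\delta_i=\delta(v_i,v_{i+1})$ for $i=1,2,3$. The $4$-tuple $\{v_1,v_2,v_3,v_4\}$ is an edge of $H$ if and only if one of the following holds: (i) $\delta_1<\delta_2<\delta_3$ or $\delta_1>\delta_2>\delta_3$, and $\phi(\delta_1,\delta_2)=\phi(\delta_2,\delta_3)\ne\phi(\delta_1,\delta_3)$; (ii) $\delta_1>\delta_2<\delta_3$, $\delta_1>\delta_3$, and $\phi(\delta_1,\delta_2)\ne\phi(\delta_2,\delta_3)$; (iii) $\delta_1>\delta_2<\delta_3$, $\delta_1<\delta_3$, and $\phi(\delta_1,\delta_2)=\phi(\delta_1,\delta_3)=\phi(\delta_2,\delta_3)$. An independent set of $H$ is a set of vertices containing no edge of $H$. *)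

theory Defs
  imports Main
begin

text \<open>Colours red/blue are represented by bool; the colouring phi is a function on 2-element
  subsets of U, evaluated at {x, y}.\<close>

definition delta :: "nat \<Rightarrow> nat \<Rightarrow> nat \<Rightarrow> nat" where
  "delta M a b = (GREATEST i. i < M \<and> bit a i \<noteq> bit b i)"

definition is_edge :: "nat \<Rightarrow> (nat set \<Rightarrow> bool) \<Rightarrow> nat \<Rightarrow> nat \<Rightarrow> nat \<Rightarrow> nat \<Rightarrow> bool" where
  "is_edge M phi v1 v2 v3 v4 \<longleftrightarrow>
     (let d1 = delta M v1 v2; d2 = delta M v2 v3; d3 = delta M v3 v4 in
       (((d1 < d2 \<and> d2 < d3) \<or> (d1 > d2 \<and> d2 > d3)) \<and>
          phi {d1, d2} = phi {d2, d3} \<and> phi {d2, d3} \<noteq> phi {d1, d3})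
     \<or> (d1 > d2 \<and> d2 < d3 \<and> d1 > d3 \<and> phi {d1, d2} \<noteq> phi {d2, d3})
     \<or> (d1 > d2 \<and> d2 < d3 \<and> d1 < d3 \<and> phi {d1, d2} = phi {d1, d3} \<and> phi {d1, d3} = phi {d2, d3}))"

definition independent_H :: "nat \<Rightarrow> (nat set \<Rightarrow> bool) \<Rightarrow> nat set \<Rightarrow> bool" where
  "independent_H M phi Q \<longleftrightarrow> Q \<subseteq> {..<2^M} \<and>
     (\<forall>v1\<in>Q. \<forall>v2\<in>Q. \<forall>v3\<in>Q. \<forall>v4\<in>Q. v1 < v2 \<and> v2 < v3 \<and> v3 < v4 \<longrightarrow> \<not> is_edge M phi v1 v2 v3 v4)"

end

theory Submission
  imports Defs
begin


lemma bits_differ_below: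
  fixes a b M :: nat
  assumes "a < 2^M" "b < 2^M" "a \<noteq> b"
  shows "\<exists>i<M. bit a i \<noteq> bit b i"
proof -
  obtain i where i: "bit a i \<noteq> bit b i" using assms(3) bit_eq_iff by blast
  have "i < M"
  proof (rule ccontr)
    assume "\<not> i < M"
    hence "2^M \<le> (2::nat)^i" by simp
    hence "a div 2^i = 0" "b div 2^i = 0" using assms by (meson div_less less_le_trans)+
    thus False using i by (metis bit_iff_odd even_zero)
  qed
  thus ?thesis using i by blast
qed

lemma delta_lt:
  fixes a b M :: nat
  assumes "a < 2^M" "b < 2^M" "a \<noteq> b"
  shows "delta M a b < M"
proof -
  have "\<exists>i. i < M \<and> bit a i \<noteq> bit b i" using bits_differ_below[OF assms] by blast
  hence "(\<lambda>i. i < M \<and> bit a i \<noteq> bit b i) (GREATEST i. i < M \<and> bit a i \<noteq> bit b i)"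
    by (rule GreatestI_ex_nat[where b=M]) auto
  thus ?thesis unfolding delta_def by blast
qed

theorem lemma3p2:
  fixes n M m :: nat and phi :: "nat set \<Rightarrow> bool" and v :: "nat \<Rightarrow> nat"
  assumes "n \<ge> 5" and "M \<ge> 1"
    and col: "\<forall>S. S \<subseteq> {..<M} \<and> card S = n \<longrightarrow>
               (\<exists>x\<in>S. \<exists>y\<in>S. \<exists>z\<in>S. x < y \<and> y < z \<and>
                  phi {x, y} = phi {y, z} \<and> phi {y, z} \<noteq> phi {x, z})"
    and v_mono: "strict_mono_on {1..m} v"
    and indep: "independent_H M phi (v ` {1..m})"
  shows "\<not> (\<exists>idx :: nat \<Rightarrow> nat.
            strict_mono_on {1..n} idx \<and>
            (\<forall>k\<in>{1..n}. 1 \<le> idx k \<and> idx k \<le> m - 1) \<and>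
            ((\<forall>j\<in>{1..n}. \<forall>k\<in>{1..n}. j < k \<longrightarrow>
                 delta M (v (idx j)) (v (Suc (idx j))) < delta M (v (idx k)) (v (Suc (idx k)))) \<or>
             (\<forall>j\<in>{1..n}. \<forall>k\<in>{1..n}. j < k \<longrightarrow>
                 delta M (v (idx j)) (v (Suc (idx j))) > delta M (v (idx k)) (v (Suc (idx k))))) \<and>
            (\<forall>a b c. 1 \<le> a \<and> a < b \<and> b < c \<and> c \<le> n \<longrightarrow>
               (\<exists>u1\<in>v ` {1..m}. \<exists>u2\<in>v ` {1..m}. \<exists>u3\<in>v ` {1..m}. \<exists>u4\<in>v ` {1..m}.
                  u1 < u2 \<and> u2 < u3 \<and> u3 < u4 \<and>
                  delta M u1 u2 = delta M (v (idx a)) (v (Suc (idx a))) \<and>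
                  delta M u2 u3 = delta M (v (idx b)) (v (Suc (idx b))) \<and>
                  delta M u3 u4 = delta M (v (idx c)) (v (Suc (idx c))))))"
  proof
  assume "\<exists>idx :: nat \<Rightarrow> nat.
            strict_mono_on {1..n} idx \<and>
            (\<forall>k\<in>{1..n}. 1 \<le> idx k \<and> idx k \<le> m - 1) \<and>
            ((\<forall>j\<in>{1..n}. \<forall>k\<in>{1..n}. j < k \<longrightarrow>
                 delta M (v (idx j)) (v (Suc (idx j))) < delta M (v (idx k)) (v (Suc (idx k)))) \<or>
             (\<forall>j\<in>{1..n}. \<forall>k\<in>{1..n}. j < k \<longrightarrow>
                 delta M (v (idx j)) (v (Suc (idx j))) > delta M (v (idx k)) (v (Suc (idx k))))) \<and>
            (\<forall>a b c. 1 \<le> a \<and> a < b \<and> b < c \<and> c \<le> n \<longrightarrow>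
               (\<exists>u1\<in>v ` {1..m}. \<exists>u2\<in>v ` {1..m}. \<exists>u3\<in>v ` {1..m}. \<exists>u4\<in>v ` {1..m}.
                  u1 < u2 \<and> u2 < u3 \<and> u3 < u4 \<and>
                  delta M u1 u2 = delta M (v (idx a)) (v (Suc (idx a))) \<and>
                  delta M u2 u3 = delta M (v (idx b)) (v (Suc (idx b))) \<and>
                  delta M u3 u4 = delta M (v (idx c)) (v (Suc (idx c)))))"
  then obtain idx where rng: "\<forall>k\<in>{1..n}. 1 \<le> idx k \<and> idx k \<le> m - 1"
    and mon: "(\<forall>j\<in>{1..n}. \<forall>k\<in>{1..n}. j < k \<longrightarrow>
                 delta M (v (idx j)) (v (Suc (idx j))) < delta M (v (idx k)) (v (Suc (idx k)))) \<or>
             (\<forall>j\<in>{1..n}. \<forall>k\<in>{1..n}. j < k \<longrightarrow>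
                 delta M (v (idx j)) (v (Suc (idx j))) > delta M (v (idx k)) (v (Suc (idx k))))"
    and tr: "\<forall>a b c. 1 \<le> a \<and> a < b \<and> b < c \<and> c \<le> n \<longrightarrow>
               (\<exists>u1\<in>v ` {1..m}. \<exists>u2\<in>v ` {1..m}. \<exists>u3\<in>v ` {1..m}. \<exists>u4\<in>v ` {1..m}.
                  u1 < u2 \<and> u2 < u3 \<and> u3 < u4 \<and>
                  delta M u1 u2 = delta M (v (idx a)) (v (Suc (idx a))) \<and>
                  delta M u2 u3 = delta M (v (idx b)) (v (Suc (idx b))) \<and>
                  delta M u3 u4 = delta M (v (idx c)) (v (Suc (idx c))))"
    by blast
  define D where "D k = delta M (v (idx k)) (v (Suc (idx k)))" for k
  have sub: "v ` {1..m} \<subseteq> {..<2^M}" using indep unfolding independent_H_def by blast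
  have noedge: "\<And>u1 u2 u3 u4. u1 \<in> v ` {1..m} \<Longrightarrow> u2 \<in> v ` {1..m} \<Longrightarrow> u3 \<in> v ` {1..m}
      \<Longrightarrow> u4 \<in> v ` {1..m} \<Longrightarrow> u1 < u2 \<Longrightarrow> u2 < u3 \<Longrightarrow> u3 < u4 \<Longrightarrow> \<not> is_edge M phi u1 u2 u3 u4"
    using indep unfolding independent_H_def by blast
  have DM: "D k < M" if "k \<in> {1..n}" for k
  proof -
    have "1 \<le> idx k" "idx k \<le> m - 1" using rng that by auto
    hence a: "idx k \<in> {1..m}" "Suc (idx k) \<in> {1..m}" by auto
    hence "v (idx k) < v (Suc (idx k))" using v_mono by (auto simp: strict_mono_on_def)
    moreover have "v (idx k) < 2^M" "v (Suc (idx k)) < 2^M" using sub a by (meson image_subset_iff lessThan_iff)+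
    ultimately show ?thesis unfolding D_def by (intro delta_lt) auto
  qed
  have injD: "inj_on D {1..n}"
  proof (rule inj_onI)
    fix j k assume jk: "j \<in> {1..n}" "k \<in> {1..n}" "D j = D k"
    have m2: "(\<forall>j\<in>{1..n}. \<forall>k\<in>{1..n}. j < k \<longrightarrow> D j < D k) \<or>
       (\<forall>j\<in>{1..n}. \<forall>k\<in>{1..n}. j < k \<longrightarrow> D k < D j)"
      using mon unfolding D_def by blast
    show "j = k"
    proof (rule ccontr)
      assume "j \<noteq> k"
      hence "j < k \<or> k < j" by arith
      thus False
      proof
        assume "j < k"
        hence "D j < D k \<or> D k < D j" using m2 jk(1,2) by blast
        thus False using jk(3) by simp
      next
        assume "k < j"
        hence "D k < D j \<or> D j < D k" using m2 jk(1,2) by blast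
        thus False using jk(3) by simp
      qed
    qed
  qed
  have "D ` {1..n} \<subseteq> {..<M} \<and> card (D ` {1..n}) = n"
    using DM injD by (auto simp: card_image)
  hence "\<exists>x\<in>D ` {1..n}. \<exists>y\<in>D ` {1..n}. \<exists>z\<in>D ` {1..n}. x < y \<and> y < z \<and>
                  phi {x, y} = phi {y, z} \<and> phi {y, z} \<noteq> phi {x, z}"
    using col by (rule_tac allE[OF col, of "D ` {1..n}"]) simp
  then obtain x y z where xyz: "x \<in> D ` {1..n}" "y \<in> D ` {1..n}" "z \<in> D ` {1..n}"
    "x < y" "y < z" "phi {x, y} = phi {y, z}" "phi {y, z} \<noteq> phi {x, z}"
    by blast
  then obtain a b c where abc: "a \<in> {1..n}" "b \<in> {1..n}" "c \<in> {1..n}"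
    "x = D a" "y = D b" "z = D c" by blast
  show False
    using mon unfolding D_def[symmetric]
  proof
    assume inc: "\<forall>j\<in>{1..n}. \<forall>k\<in>{1..n}. j < k \<longrightarrow> D j < D k"
    have "a < b"
    proof (rule ccontr)
      assume "\<not> a < b"
      hence "b < a \<or> b = a" by arith
      moreover have "b < a \<Longrightarrow> D b < D a" using inc abc by blast
      ultimately show False using xyz abc by auto
    qed
    have "b < c"
    proof (rule ccontr)
      assume "\<not> b < c"
      hence "c < b \<or> c = b" by arith
      moreover have "c < b \<Longrightarrow> D c < D b" using inc abc by blast
      ultimately show False using xyz abc by auto
    qed
    then obtain u1 u2 u3 u4 where u: "u1 \<in> v ` {1..m}" "u2 \<in> v ` {1..m}" "u3 \<in> v ` {1..m}"
      "u4 \<in> v ` {1..m}" "u1 < u2" "u2 < u3" "u3 < u4"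
      "delta M u1 u2 = x" "delta M u2 u3 = y" "delta M u3 u4 = z"
      proof -
      have "1 \<le> a \<and> a < b \<and> b < c \<and> c \<le> n" using abc \<open>a < b\<close> \<open>b < c\<close> by auto
      hence "\<exists>u1\<in>v ` {1..m}. \<exists>u2\<in>v ` {1..m}. \<exists>u3\<in>v ` {1..m}. \<exists>u4\<in>v ` {1..m}.
                  u1 < u2 \<and> u2 < u3 \<and> u3 < u4 \<and>
                  delta M u1 u2 = D a \<and> delta M u2 u3 = D b \<and> delta M u3 u4 = D c"
        using tr unfolding D_def by blast
      thus ?thesis using that abc by blast
    qed
    have "is_edge M phi u1 u2 u3 u4" unfolding is_edge_def Let_def u(8-10)
      using xyz by simp
    thus False using noedge u by blast
  next
    assume dec: "\<forall>j\<in>{1..n}. \<forall>k\<in>{1..n}. j < k \<longrightarrow> D j > D k"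
    have "c < b"
    proof (rule ccontr)
      assume "\<not> c < b"
      hence "b < c \<or> b = c" by arith
      moreover have "b < c \<Longrightarrow> D c < D b" using dec abc by blast
      ultimately show False using xyz abc by auto
    qed
    have "b < a"
    proof (rule ccontr)
      assume "\<not> b < a"
      hence "a < b \<or> a = b" by arith
      moreover have "a < b \<Longrightarrow> D b < D a" using dec abc by blast
      ultimately show False using xyz abc by auto
    qed
    then obtain u1 u2 u3 u4 where u: "u1 \<in> v ` {1..m}" "u2 \<in> v ` {1..m}" "u3 \<in> v ` {1..m}"
      "u4 \<in> v ` {1..m}" "u1 < u2" "u2 < u3" "u3 < u4"
      "delta M u1 u2 = z" "delta M u2 u3 = y" "delta M u3 u4 = x"
      proof -
      have "1 \<le> c \<and> c < b \<and> b < a \<and> a \<le> n" using abc \<open>c < b\<close> \<open>b < a\<close> by auto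
      hence "\<exists>u1\<in>v ` {1..m}. \<exists>u2\<in>v ` {1..m}. \<exists>u3\<in>v ` {1..m}. \<exists>u4\<in>v ` {1..m}.
                  u1 < u2 \<and> u2 < u3 \<and> u3 < u4 \<and>
                  delta M u1 u2 = D c \<and> delta M u2 u3 = D b \<and> delta M u3 u4 = D a"
        using tr unfolding D_def by blast
      thus ?thesis using that abc by blast
    qed
    have "is_edge M phi u1 u2 u3 u4" unfolding is_edge_def Let_def u(8-10)
      using xyz by (simp add: insert_commute[of z y] insert_commute[of y x] insert_commute[of z x])
    thus False using noedge u by blast
  qed
qed

end
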